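(* Let $K\subset\mathbb C$ be compact, $1\le t<\infty$, $\mu$ a finite positive Borel measure compactly supported in $K$, and let $\{\Delta_{00},\Delta_{01}\}$ be a Borel partition of $\operatorname{spt}\mu$ such that $R^t(K,\mu)=L^t(\mu_{\Delta_{00}})\oplus R^t(K,\mu_{\Delta_{01}})$ and multiplication by $z$ on $R^t(K,\mu_{\Delta_{01}})$ is pure. Then $\operatorname{abpe}(R^t(K,\mu_{\Delta_{01}}))=\operatorname{abpe}(R^t(K,\mu))$.
   Context: $\mathrm{Rat}(K)$: rational functions with poles off $K$; $R^t(K,\mu)$ its closure in $L^t(\mu)$; $\mu_\Delta$ is the restriction of $\mu$ to $\Delta$. Purity means no non-trivial direct summand of the form $L^t(\mu_\Delta)$. A point $z_0\in K$ is a bounded point evaluation for $R^t(K,\mu)$ if $r\mapsto r(z_0)$ is bounded on $\mathrm{Rat}(K)$ in the $L^t(\mu)$ norm. $z_0$ is an analytic bounded point evaluation if $z_0$ is in the interior of the set of bounded point evaluations and there are $\delta,M>0$ with $|r(z)|\le M\|r\|_{L^t(\mu)}$ for all $z\in\mathbb D(z_0,\delta)$ and $r\in\mathrm{Rat}(K)$; $\operatorname{abpe}(R^t(K,\mu))$ is the set of these points. *)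

theory Defs
  imports "HOL-Analysis.Analysis" "HOL-Computational_Algebra.Polynomial"
begin

definition spt :: "complex measure \<Rightarrow> complex set" where
  "spt \<mu> = {z. \<forall>e>0. emeasure \<mu> (ball z e) \<noteq> 0}"

definition restr :: "complex measure \<Rightarrow> complex set \<Rightarrow> complex measure" where
  "restr \<mu> \<Delta> = density \<mu> (\<lambda>z. indicator \<Delta> z)"

definition Rat :: "complex set \<Rightarrow> (complex \<Rightarrow> complex) set" where
  "Rat K = {r. \<exists>p q. (\<forall>z\<in>K. poly q z \<noteq> 0) \<and> r = (\<lambda>z. poly p z / poly q z)}"

text \<open>L^t(mu) as a set of functions (membership is invariant under a.e. modification).\<close>
definition Lt :: "complex measure \<Rightarrow> real \<Rightarrow> (complex \<Rightarrow> complex) set" where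
  "Lt \<mu> t = {f. f \<in> borel_measurable \<mu> \<and> integrable \<mu> (\<lambda>z. cmod (f z) powr t)}"

definition Lt_norm :: "complex measure \<Rightarrow> real \<Rightarrow> (complex \<Rightarrow> complex) \<Rightarrow> real" where
  "Lt_norm \<mu> t f = (enn2real (\<integral>\<^sup>+ z. ennreal (cmod (f z) powr t) \<partial>\<mu>)) powr (1 / t)"

definition Rt :: "complex set \<Rightarrow> complex measure \<Rightarrow> real \<Rightarrow> (complex \<Rightarrow> complex) set" where
  "Rt K \<mu> t = {f \<in> Lt \<mu> t. \<forall>\<epsilon>>0. \<exists>r\<in>Rat K. Lt_norm \<mu> t (\<lambda>z. f z - r z) < \<epsilon>}"

text \<open>Purity: R^t(K,mu) has no non-trivial direct summand of the form L^t(mu_Delta),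
  i.e. there is no Borel Delta with mu(Delta) > 0 such that L^t(mu_Delta)
  (embedded in L^t(mu) as functions vanishing off Delta) is contained in R^t(K,mu).\<close>
definition pure :: "complex set \<Rightarrow> complex measure \<Rightarrow> real \<Rightarrow> bool" where
  "pure K \<mu> t \<longleftrightarrow> \<not> (\<exists>\<Delta> \<in> sets borel. emeasure \<mu> \<Delta> > 0 \<and>
      (\<forall>f \<in> Lt (restr \<mu> \<Delta>) t. (\<lambda>z. indicator \<Delta> z * f z) \<in> Rt K \<mu> t))"

definition bpe :: "complex set \<Rightarrow> complex measure \<Rightarrow> real \<Rightarrow> complex \<Rightarrow> bool" where
  "bpe K \<mu> t z0 \<longleftrightarrow> z0 \<in> K \<and> (\<exists>M. \<forall>r\<in>Rat K. cmod (r z0) \<le> M * Lt_norm \<mu> t r)"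

definition abpe :: "complex set \<Rightarrow> complex measure \<Rightarrow> real \<Rightarrow> complex set" where
  "abpe K \<mu> t = {z0. z0 \<in> interior {z. bpe K \<mu> t z} \<and>
      (\<exists>\<delta>>0. \<exists>M>0. \<forall>z\<in>ball z0 \<delta>. \<forall>r\<in>Rat K. cmod (r z) \<le> M * Lt_norm \<mu> t r)}"

end

theory Submission
  imports Defs
begin


lemma spt_AE:
  assumes "sets \<mu> = sets borel"
  shows "AE z in \<mu>. z \<in> spt \<mu>"
proof -
  obtain B :: "complex set set" where B: "countable B" "\<And>C. C \<in> B \<Longrightarrow> open C"
    "\<And>S. open S \<Longrightarrow> \<exists>U. U \<subseteq> B \<and> S = \<Union>U"
    using univ_second_countable by blast
  let ?N = "\<Union>{b\<in>B. emeasure \<mu> b = 0}"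
  have sb: "b \<in> sets \<mu>" if "b \<in> B" for b using B(2)[OF that] assms by auto
  have "(\<Union>b\<in>{b\<in>B. emeasure \<mu> b = 0}. b) \<in> null_sets \<mu>"
    apply (rule null_sets_UN')
    using B(1) sb by (auto intro: countable_subset[of _ B] simp: null_sets_def)
  then have "?N \<in> null_sets \<mu>" by simp
  moreover have "{x\<in>space \<mu>. \<not> x \<in> spt \<mu>} \<subseteq> ?N"
  proof
    fix x assume "x \<in> {x\<in>space \<mu>. \<not> x \<in> spt \<mu>}"
    then obtain e where e: "e > 0" "emeasure \<mu> (ball x e) = 0" unfolding spt_def by auto
    obtain U where U: "U \<subseteq> B" "ball x e = \<Union>U" using B(3)[of "ball x e"] by auto
    then obtain b where b: "b \<in> U" "x \<in> b" using e(1) by (metis UnionE centre_in_ball)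
    have "emeasure \<mu> b \<le> emeasure \<mu> (ball x e)"
    proof (rule emeasure_mono)
      show "b \<subseteq> ball x e" using U b by auto
      show "ball x e \<in> sets \<mu>" using assms by simp
    qed
    then have "emeasure \<mu> b = 0" using e by simp
    then show "x \<in> ?N" using b U by auto
  qed
  ultimately show ?thesis by (rule AE_I')
qed




lemma Rat_meas: "r \<in> Rat K \<Longrightarrow> r \<in> borel_measurable borel"
proof -
  assume "r \<in> Rat K"
  then obtain p q where r: "r = (\<lambda>z. poly p z / poly q z)" unfolding Rat_def by blast
  have m1: "(\<lambda>z. poly p z) \<in> borel_measurable borel"
    by (intro borel_measurable_continuous_onI continuous_intros)
  have m2: "(\<lambda>z. poly q z) \<in> borel_measurable borel"
    by (intro borel_measurable_continuous_onI continuous_intros)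
  show ?thesis unfolding r by (rule borel_measurable_divide[OF m1 m2])
qed

lemma Rat_isCont: "r \<in> Rat K \<Longrightarrow> z \<in> K \<Longrightarrow> isCont r z"
  unfolding Rat_def by (auto intro!: continuous_intros)

lemma Rat_cont_on: "r \<in> Rat K \<Longrightarrow> continuous_on K r"
  by (meson Rat_isCont continuous_at_imp_continuous_on)

lemma Rat_bdd: assumes "compact K" "r \<in> Rat K" shows "\<exists>C>0. \<forall>z\<in>K. cmod (r z) \<le> C"
proof -
  have "compact (r ` K)" by (rule compact_continuous_image[OF Rat_cont_on[OF assms(2)] assms(1)])
  then have "bounded (r ` K)" by (rule compact_imp_bounded)
  then obtain C where "\<forall>x\<in>r ` K. norm x \<le> C" unfolding bounded_iff by blast
  then show ?thesis by (intro exI[of _ "max C 1"]) auto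
qed

lemma Rat_zero: "(\<lambda>z. 0) \<in> Rat K"
  unfolding Rat_def by (intro CollectI exI[of _ 0] exI[of _ 1]) auto

lemma Rat_lin: assumes "r \<in> Rat K" shows "(\<lambda>w. (w - z) * r w) \<in> Rat K"
proof -
  obtain p q where pq: "\<forall>z\<in>K. poly q z \<noteq> 0" "r = (\<lambda>z. poly p z / poly q z)"
    using assms unfolding Rat_def by blast
  show ?thesis unfolding Rat_def
  proof (intro CollectI exI conjI)
    show "\<forall>z\<in>K. poly q z \<noteq> 0" by (rule pq(1))
    show "(\<lambda>w. (w - z) * r w) = (\<lambda>w. poly ([:-z,1:] * p) w / poly q w)"
      by (rule ext) (simp add: pq(2) algebra_simps)
  qed
qed

lemma Rat_diff: assumes "r1 \<in> Rat K" "r2 \<in> Rat K"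
  shows "\<exists>u\<in>Rat K. \<forall>w\<in>K. u w = r1 w - r2 w"
proof -
  obtain p1 q1 where 1: "\<forall>z\<in>K. poly q1 z \<noteq> 0" "r1 = (\<lambda>z. poly p1 z / poly q1 z)"
    using assms(1) unfolding Rat_def by blast
  obtain p2 q2 where 2: "\<forall>z\<in>K. poly q2 z \<noteq> 0" "r2 = (\<lambda>z. poly p2 z / poly q2 z)"
    using assms(2) unfolding Rat_def by blast
  let ?u = "\<lambda>z. poly (p1 * q2 - p2 * q1) z / poly (q1 * q2) z"
  have "?u \<in> Rat K" unfolding Rat_def
  proof (intro CollectI exI conjI)
    show "\<forall>z\<in>K. poly (q1 * q2) z \<noteq> 0" using 1 2 by simp
  qed (rule refl)
  moreover have "\<forall>w\<in>K. ?u w = r1 w - r2 w" using 1 2 by (auto simp: field_simps)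
  ultimately show ?thesis by (intro bexI[of _ ?u])
qed




definition good :: "complex measure \<Rightarrow> complex set \<Rightarrow> bool" where
  "good \<nu> K \<longleftrightarrow> sets \<nu> = sets borel \<and> emeasure \<nu> UNIV \<noteq> \<infinity> \<and> (AE w in \<nu>. w \<in> K)"

lemma sets_restr: "sets (restr \<mu> \<Delta>) = sets \<mu>"
  unfolding restr_def by simp

lemma space_good: "sets \<nu> = sets borel \<Longrightarrow> space \<nu> = UNIV"
  using sets_eq_imp_space_eq by fastforce

lemma meas_borel: "sets \<nu> = sets borel \<Longrightarrow> f \<in> borel_measurable borel \<Longrightarrow> f \<in> borel_measurable \<nu>"
  using measurable_cong_sets by blast

lemma nn_restr:
  assumes "sets \<mu> = sets borel" "\<Delta> \<in> sets borel" "g \<in> borel_measurable borel"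
  shows "(\<integral>\<^sup>+ w. g w \<partial>restr \<mu> \<Delta>) = (\<integral>\<^sup>+ w. indicator \<Delta> w * g w \<partial>\<mu>)"
  unfolding restr_def
  by (rule nn_integral_density) (use assms meas_borel in auto)

lemma good_restr:
  assumes "good \<mu> K" "\<Delta> \<in> sets borel"
  shows "good (restr \<mu> \<Delta>) K"
proof -
  have s: "sets \<mu> = sets borel" using assms unfolding good_def by auto
  have im: "(\<lambda>z. indicator \<Delta> z :: ennreal) \<in> borel_measurable \<mu>"
    using s assms(2) by (simp add: meas_borel)
  have "emeasure (restr \<mu> \<Delta>) UNIV = (\<integral>\<^sup>+ x. indicator \<Delta> x * indicator UNIV x \<partial>\<mu>)"
    unfolding restr_def by (rule emeasure_density[OF im]) (simp add: s)
  also have "\<dots> \<le> (\<integral>\<^sup>+ x. 1 \<partial>\<mu>)"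
    by (rule nn_integral_mono) (auto simp: indicator_def)
  also have "\<dots> = emeasure \<mu> UNIV" using space_good[OF s] by simp
  finally have "emeasure (restr \<mu> \<Delta>) UNIV \<noteq> \<infinity>"
    using assms(1) unfolding good_def by (auto simp: top_unique)
  moreover have "AE w in restr \<mu> \<Delta>. w \<in> K"
    unfolding restr_def AE_density[OF im] using assms(1) unfolding good_def by auto
  ultimately show ?thesis unfolding good_def sets_restr using s by auto
qed

lemma good_fin:
  assumes "good \<nu> K" "f \<in> borel_measurable borel" "\<forall>w\<in>K. cmod (f w) \<le> C" "t > 0"
  shows "(\<integral>\<^sup>+ w. ennreal (cmod (f w) powr t) \<partial>\<nu>) < \<infinity>"
proof -
  have s: "sets \<nu> = sets borel" using assms unfolding good_def by auto
  have "(\<integral>\<^sup>+ w. ennreal (cmod (f w) powr t) \<partial>\<nu>) \<le> (\<integral>\<^sup>+ w. ennreal (C powr t) \<partial>\<nu>)"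
  proof (rule nn_integral_mono_AE)
    show "AE w in \<nu>. ennreal (cmod (f w) powr t) \<le> ennreal (C powr t)"
      using assms(1)[unfolded good_def, THEN conjunct2, THEN conjunct2]
    proof (eventually_elim)
      case (elim w)
      then show ?case using assms(3,4) by (auto intro!: ennreal_leI powr_mono2)
    qed
  qed
  also have "\<dots> = ennreal (C powr t) * emeasure \<nu> UNIV" using space_good[OF s] by simp
  also have "\<dots> < \<infinity>" using assms(1) unfolding good_def by (simp add: ennreal_mult_less_top less_top)
  finally show ?thesis .
qed

lemma good_Lt:
  assumes "good \<nu> K" "f \<in> borel_measurable borel" "\<forall>w\<in>K. cmod (f w) \<le> C" "t > 0"
  shows "f \<in> Lt \<nu> t"
proof -
  have s: "sets \<nu> = sets borel" using assms unfolding good_def by auto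
  have fm: "f \<in> borel_measurable \<nu>" using meas_borel[OF s assms(2)] .
  have "integrable \<nu> (\<lambda>z. cmod (f z) powr t)"
  proof (rule integrableI_bounded)
    show "(\<lambda>z. cmod (f z) powr t) \<in> borel_measurable \<nu>" using fm by measurable
    show "(\<integral>\<^sup>+ x. ennreal (norm (cmod (f x) powr t)) \<partial>\<nu>) < \<infinity>"
      using good_fin[OF assms] by simp
  qed
  then show ?thesis unfolding Lt_def using fm by auto
qed




lemma small_ball:
  assumes s: "sets \<mu> = sets borel" and f: "emeasure \<mu> UNIV \<noteq> \<infinity>" and z: "emeasure \<mu> {z} = 0"
    and th: "(\<theta>::real) > 0"
  shows "\<exists>\<epsilon>>0. emeasure \<mu> (ball z \<epsilon>) < ennreal \<theta>"
proof -
  let ?A = "\<lambda>n::nat. ball z (1 / real (Suc n))"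
  have sp: "space \<mu> = UNIV" using space_good[OF s] .
  have "range ?A \<subseteq> sets \<mu>" unfolding s by auto
  moreover have "decseq ?A"
  proof (rule decseq_SucI)
    fix n show "?A (Suc n) \<subseteq> ?A n" by (rule subset_ball) (simp add: divide_simps)
  qed
  moreover have "\<And>i. emeasure \<mu> (?A i) \<noteq> \<infinity>"
  proof -
    fix i
    have "emeasure \<mu> (?A i) \<le> emeasure \<mu> UNIV" by (rule emeasure_mono) (auto simp: s)
    then show "emeasure \<mu> (?A i) \<noteq> \<infinity>" using f by (auto simp: top_unique)
  qed
  ultimately have lim: "(\<lambda>i. emeasure \<mu> (?A i)) \<longlonglongrightarrow> emeasure \<mu> (\<Inter>i. ?A i)"
    by (rule Lim_emeasure_decseq)
  have "(\<Inter>i. ?A i) = {z}"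
  proof (intro equalityI subsetI)
    fix x assume "x \<in> (\<Inter>i. ?A i)"
    then have h: "\<forall>i. dist z x < 1 / real (Suc i)" by simp
    show "x \<in> {z}"
    proof -
    have "x = z"
    proof (rule ccontr)
      assume "x \<noteq> z"
      then have "dist z x > 0" by simp
      then obtain n where "1 / real (Suc n) < dist z x"
        by (rule nat_approx_posE)
      with h show False using less_asym by blast
    qed
    then show ?thesis by simp
    qed
  qed simp
  with lim z have "(\<lambda>i. emeasure \<mu> (?A i)) \<longlonglongrightarrow> 0" by simp
  then have "eventually (\<lambda>i. emeasure \<mu> (?A i) < ennreal \<theta>) sequentially"
    using th by (intro order_tendstoD(2)) auto
  then obtain n where "\<forall>i\<ge>n. emeasure \<mu> (?A i) < ennreal \<theta>" unfolding eventually_sequentially by blast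
  then have "emeasure \<mu> (?A n) < ennreal \<theta>" by blast
  moreover have "1 / real (Suc n) > 0" by simp
  ultimately show ?thesis by blast
qed

lemma powr_tri:
  fixes x y :: complex assumes "t > 0"
  shows "cmod (x + y) powr t \<le> 2 powr t * (cmod x powr t + cmod y powr t)"
proof -
  let ?m = "max (cmod x) (cmod y)"
  have "cmod (x + y) \<le> 2 * ?m" using norm_triangle_ineq[of x y] by linarith
  then have "cmod (x + y) powr t \<le> (2 * ?m) powr t" using assms by (intro powr_mono2) auto
  also have "\<dots> = 2 powr t * ?m powr t" by (simp add: powr_mult)
  also have "?m powr t \<le> cmod x powr t + cmod y powr t"
    by (cases "cmod x \<le> cmod y") (auto simp: max_def)
  then have "2 powr t * ?m powr t \<le> 2 powr t * (cmod x powr t + cmod y powr t)"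
    by (rule mult_left_mono) auto
  finally show ?thesis .
qed




lemma key:
  assumes cK: "compact K" and t1: "1 \<le> t" and g: "good \<mu> K"
    and D00: "\<Delta>00 \<in> sets borel" and D01: "\<Delta>01 \<in> sets borel"
    and L00: "\<And>f. f \<in> Lt (restr \<mu> \<Delta>00) t \<Longrightarrow> f \<in> Rt K (restr \<mu> \<Delta>01) t \<Longrightarrow> f \<in> Rt K \<mu> t"
    and zK: "z \<in> K" and za: "emeasure \<mu> {z} = 0" and M0: "M \<ge> 0"
    and bnd: "\<forall>u\<in>Rat K. cmod (u z) \<le> M * Lt_norm \<mu> t u"
    and rR: "r \<in> Rat K"
  shows "cmod (r z) \<le> 2 * M * Lt_norm (restr \<mu> \<Delta>01) t r"
proof -
  have tpos: "t > 0" using t1 by simp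
  have s: "sets \<mu> = sets borel" and finU: "emeasure \<mu> UNIV \<noteq> \<infinity>" and AEK: "AE w in \<mu>. w \<in> K"
    using g unfolding good_def by auto
  have sp: "space \<mu> = UNIV" using space_good[OF s] .
  interpret finite_measure \<mu> using finU sp by (intro finite_measureI) simp
  have rm[measurable]: "r \<in> borel_measurable borel" using Rat_meas[OF rR] .
  have D01m[measurable]: "\<Delta>01 \<in> sets borel" using D01 .
  obtain Cr where Cr: "Cr > 0" "\<forall>w\<in>K. cmod (r w) \<le> Cr" using Rat_bdd[OF cK rR] by blast
  obtain B where B: "\<forall>w\<in>K. cmod w \<le> B"
    using compact_imp_bounded[OF cK] unfolding bounded_iff by blast
  define D where "D = B + cmod z + 1"
  have Dpos: "D > 0"
  proof -
    have "0 \<le> cmod z" by simp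
    moreover have "cmod z \<le> B" using B zK by blast
    ultimately show ?thesis unfolding D_def by linarith
  qed
  have Dw: "\<forall>w\<in>K. cmod (w - z) \<le> D"
  proof
    fix w assume "w \<in> K"
    then have "cmod w \<le> B" using B by blast
    moreover have "cmod (w - z) \<le> cmod w + cmod z" by (rule norm_triangle_ineq4)
    ultimately show "cmod (w - z) \<le> D" unfolding D_def by linarith
  qed
  define I01 where "I01 = (\<integral>\<^sup>+ w. indicator \<Delta>01 w * ennreal (cmod (r w) powr t) \<partial>\<mu>)"
  have I01_eq: "I01 = (\<integral>\<^sup>+ w. ennreal (cmod (r w) powr t) \<partial>restr \<mu> \<Delta>01)"
    unfolding I01_def by (rule nn_restr[symmetric]) (use s D01 in auto)
  have I01_fin: "I01 < \<infinity>" unfolding I01_eq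
    by (rule good_fin[OF good_restr[OF g D01] rm Cr(2) tpos])
  define a where "a = enn2real I01"
  have a0: "a \<ge> 0" unfolding a_def by simp
  have I01a: "I01 = ennreal a" unfolding a_def using I01_fin by simp
  have N01: "Lt_norm (restr \<mu> \<Delta>01) t r = a powr (1/t)"
    unfolding Lt_norm_def a_def I01_eq ..
  have main: "cmod (r z) powr t \<le> (2 * M) powr t * (a + \<theta>)" if th: "\<theta> > 0" for \<theta>
  proof -
    have th2: "\<theta> / (2 * Cr powr t) > 0" using th Cr by simp
    obtain \<epsilon> where ep: "\<epsilon> > 0" "emeasure \<mu> (ball z \<epsilon>) < ennreal (\<theta> / (2 * Cr powr t))"
      using small_ball[OF s finU za th2] by blast
    define A where "A = (UNIV - \<Delta>01) - ball z \<epsilon>"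
    have Am[measurable]: "A \<in> sets borel" using D01 unfolding A_def by auto
    define f1 where "f1 = (\<lambda>w. indicator A w * r w / (w - z))"
    have f1m[measurable]: "f1 \<in> borel_measurable borel" unfolding f1_def by measurable
    have f1b: "\<forall>w\<in>K. cmod (f1 w) \<le> Cr / \<epsilon>"
    proof
      fix w assume wK: "w \<in> K"
      show "cmod (f1 w) \<le> Cr / \<epsilon>"
      proof (cases "w \<in> A")
        case True
        then have "cmod (w - z) \<ge> \<epsilon>" unfolding A_def by (auto simp: dist_norm norm_minus_commute)
        then have "cmod (r w) / cmod (w - z) \<le> Cr / \<epsilon>"
          using Cr wK ep by (intro frac_le) auto
        then show ?thesis using True unfolding f1_def by (simp add: norm_divide)
      next
        case False
        then show ?thesis unfolding f1_def using Cr ep by simp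
      qed
    qed
    have f1Lt00: "f1 \<in> Lt (restr \<mu> \<Delta>00) t" by (rule good_Lt[OF good_restr[OF g D00] f1m f1b tpos])
    have f1R01: "f1 \<in> Rt K (restr \<mu> \<Delta>01) t"
    proof -
      have "f1 \<in> Lt (restr \<mu> \<Delta>01) t" by (rule good_Lt[OF good_restr[OF g D01] f1m f1b tpos])
      moreover have "Lt_norm (restr \<mu> \<Delta>01) t (\<lambda>w. f1 w - 0) = 0"
      proof -
        have "(\<integral>\<^sup>+ w. ennreal (cmod (f1 w - 0) powr t) \<partial>restr \<mu> \<Delta>01)
            = (\<integral>\<^sup>+ w. indicator \<Delta>01 w * ennreal (cmod (f1 w - 0) powr t) \<partial>\<mu>)"
          by (rule nn_restr) (use s D01 in auto)
        also have "\<dots> = (\<integral>\<^sup>+ w. 0 \<partial>\<mu>)"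
          by (rule nn_integral_cong) (auto simp: f1_def A_def indicator_def)
        finally show ?thesis unfolding Lt_norm_def by simp
      qed
      ultimately show ?thesis unfolding Rt_def
      proof (intro CollectI conjI allI impI)
        fix e :: real assume "e > 0"
        then show "\<exists>r\<in>Rat K. Lt_norm (restr \<mu> \<Delta>01) t (\<lambda>z. f1 z - r z) < e"
          using \<open>Lt_norm (restr \<mu> \<Delta>01) t (\<lambda>w. f1 w - 0) = 0\<close>
          by (intro bexI[OF _ Rat_zero]) simp
      qed
    qed
    have f1R: "f1 \<in> Rt K \<mu> t" by (rule L00[OF f1Lt00 f1R01])
    define \<eta> where "\<eta> = (\<theta> / (2 * D powr t)) powr (1/t)"
    have eta: "\<eta> > 0" unfolding \<eta>_def using th Dpos by simp
    obtain q where q: "q \<in> Rat K" "Lt_norm \<mu> t (\<lambda>w. f1 w - q w) < \<eta>"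
      using f1R eta unfolding Rt_def by blast
    have qm[measurable]: "q \<in> borel_measurable borel" using Rat_meas[OF q(1)] .
    obtain Cq where Cq: "Cq > 0" "\<forall>w\<in>K. cmod (q w) \<le> Cq" using Rat_bdd[OF cK q(1)] by blast
    define Jint where "Jint = (\<integral>\<^sup>+ w. ennreal (cmod (f1 w - q w) powr t) \<partial>\<mu>)"
    have Jfin: "Jint < \<infinity>" unfolding Jint_def
    proof (rule good_fin[OF g _ _ tpos])
      show "(\<lambda>w. f1 w - q w) \<in> borel_measurable borel" by measurable
      show "\<forall>w\<in>K. cmod (f1 w - q w) \<le> Cr / \<epsilon> + Cq"
      proof
        fix w assume "w \<in> K"
        then have "cmod (f1 w) \<le> Cr / \<epsilon>" "cmod (q w) \<le> Cq" using f1b Cq by auto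
        moreover have "cmod (f1 w - q w) \<le> cmod (f1 w) + cmod (q w)" by (rule norm_triangle_ineq4)
        ultimately show "cmod (f1 w - q w) \<le> Cr / \<epsilon> + Cq" by linarith
      qed
    qed
    define J where "J = enn2real Jint"
    have J0: "J \<ge> 0" unfolding J_def by simp
    have JJ: "Jint = ennreal J" unfolding J_def using Jfin by simp
    have "J powr (1/t) < \<eta>" using q(2) unfolding Lt_norm_def Jint_def[symmetric] J_def[symmetric] .
    have Jlt: "J < \<theta> / (2 * D powr t)"
    proof (rule ccontr)
      assume "\<not> J < \<theta> / (2 * D powr t)"
      then have "(\<theta> / (2 * D powr t)) powr (1/t) \<le> J powr (1/t)"
        using th Dpos tpos by (intro powr_mono2) auto
      with \<open>J powr (1/t) < \<eta>\<close> show False unfolding \<eta>_def by simp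
    qed
    have sR: "(\<lambda>w. (w - z) * q w) \<in> Rat K" by (rule Rat_lin[OF q(1)])
    obtain u where u: "u \<in> Rat K" "\<forall>w\<in>K. u w = r w - (w - z) * q w"
      using Rat_diff[OF rR sR] by blast
    have "cmod (r z) = cmod (u z)" using u(2) zK by simp
    also have "\<dots> \<le> M * Lt_norm \<mu> t u" using bnd u(1) by blast
    finally have rz: "cmod (r z) \<le> M * Lt_norm \<mu> t u" .
    define Iu where "Iu = (\<integral>\<^sup>+ w. ennreal (cmod (u w) powr t) \<partial>\<mu>)"
    have Iu_eq: "Iu = (\<integral>\<^sup>+ w. ennreal (cmod (r w - (w - z) * q w) powr t) \<partial>\<mu>)"
      unfolding Iu_def
    proof (rule nn_integral_cong_AE)
      show "AE w in \<mu>. ennreal (cmod (u w) powr t) = ennreal (cmod (r w - (w - z) * q w) powr t)"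
        using AEK by eventually_elim (use u(2) in simp)
    qed
    have pw: "cmod (r w - (w - z) * q w) powr t \<le> 2 powr t * ((indicator \<Delta>01 w * cmod (r w) powr t
        + Cr powr t * indicator (ball z \<epsilon>) w) + D powr t * cmod (f1 w - q w) powr t)"
      if wK: "w \<in> K" for w
    proof -
      define x where "x = (1 - indicator A w) * r w"
      define y where "y = (w - z) * (f1 w - q w)"
      have eq: "r w - (w - z) * q w = x + y"
      proof (cases "w = z")
        case True
        then have "w \<notin> A" unfolding A_def using ep by auto
        then show ?thesis unfolding x_def y_def using True by simp
      next
        case False
        then have "(w - z) * f1 w = indicator A w * r w" unfolding f1_def by simp
        then show ?thesis unfolding x_def y_def by (simp add: algebra_simps)
      qed
      have hx: "cmod x powr t \<le> indicator \<Delta>01 w * cmod (r w) powr t + Cr powr t * indicator (ball z \<epsilon>) w"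
      proof (cases "w \<in> A")
        case True
        then show ?thesis unfolding x_def by simp
      next
        case False
        then have xr: "x = r w" unfolding x_def by simp
        from False have "w \<in> \<Delta>01 \<or> w \<in> ball z \<epsilon>" unfolding A_def by auto
        then show ?thesis
        proof
          assume "w \<in> \<Delta>01" then show ?thesis unfolding xr by simp
        next
          assume wb: "w \<in> ball z \<epsilon>"
          have "cmod (r w) powr t \<le> Cr powr t" using Cr wK tpos by (intro powr_mono2) auto
          moreover have "0 \<le> indicator \<Delta>01 w * cmod (r w) powr t" by simp
          moreover have "Cr powr t * indicator (ball z \<epsilon>) w = Cr powr t" using wb by simp
          ultimately show ?thesis unfolding xr by linarith
        qed
      qed
      have hy: "cmod y powr t \<le> D powr t * cmod (f1 w - q w) powr t"
      proof -
        have "cmod y \<le> D * cmod (f1 w - q w)" unfolding y_def norm_mult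
          using Dw wK by (intro mult_right_mono) auto
        then have "cmod y powr t \<le> (D * cmod (f1 w - q w)) powr t" using tpos by (intro powr_mono2) auto
        also have "\<dots> = D powr t * cmod (f1 w - q w) powr t" using Dpos by (simp add: powr_mult)
        finally show ?thesis .
      qed
      have "cmod (r w - (w - z) * q w) powr t \<le> 2 powr t * (cmod x powr t + cmod y powr t)"
        unfolding eq by (rule powr_tri[OF tpos])
      also have "\<dots> \<le> 2 powr t * ((indicator \<Delta>01 w * cmod (r w) powr t
        + Cr powr t * indicator (ball z \<epsilon>) w) + D powr t * cmod (f1 w - q w) powr t)"
        using hx hy by (intro mult_left_mono) auto
      finally show ?thesis .
    qed
    define m where "m = measure \<mu> (ball z \<epsilon>)"
    have m0: "m \<ge> 0" unfolding m_def by simp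
    have em: "emeasure \<mu> (ball z \<epsilon>) = ennreal m" unfolding m_def by (rule emeasure_eq_measure)
    have mlt: "m < \<theta> / (2 * Cr powr t)" using ep(2) m0 unfolding em by (simp add: ennreal_less_iff)
    have ptw: "ennreal (2 powr t * ((indicator \<Delta>01 w * cmod (r w) powr t
        + Cr powr t * indicator (ball z \<epsilon>) w) + D powr t * cmod (f1 w - q w) powr t))
      = ennreal (2 powr t) * ((indicator \<Delta>01 w * ennreal (cmod (r w) powr t)
        + ennreal (Cr powr t) * indicator (ball z \<epsilon>) w) + ennreal (D powr t) * ennreal (cmod (f1 w - q w) powr t))" for w
      by (simp add: ennreal_plus ennreal_mult ennreal_indicator ennreal_mult')
    have "Iu \<le> (\<integral>\<^sup>+ w. ennreal (2 powr t * ((indicator \<Delta>01 w * cmod (r w) powr t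
        + Cr powr t * indicator (ball z \<epsilon>) w) + D powr t * cmod (f1 w - q w) powr t)) \<partial>\<mu>)"
      unfolding Iu_eq
    proof (rule nn_integral_mono_AE)
      show "AE w in \<mu>. ennreal (cmod (r w - (w - z) * q w) powr t) \<le> ennreal (2 powr t * ((indicator \<Delta>01 w * cmod (r w) powr t
        + Cr powr t * indicator (ball z \<epsilon>) w) + D powr t * cmod (f1 w - q w) powr t))"
        using AEK by eventually_elim (rule ennreal_leI, rule pw)
    qed
    also have "\<dots> = ennreal (2 powr t) * ((I01 + ennreal (Cr powr t) * emeasure \<mu> (ball z \<epsilon>)) + ennreal (D powr t) * Jint)"
    proof -
      have m1: "(\<lambda>w. indicator \<Delta>01 w * ennreal (cmod (r w) powr t)) \<in> borel_measurable \<mu>"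
        by (rule meas_borel[OF s]) measurable
      have [measurable]: "ball z \<epsilon> \<in> sets borel" by simp
      have m2: "(\<lambda>w. ennreal (Cr powr t) * indicator (ball z \<epsilon>) w) \<in> borel_measurable \<mu>"
        by (rule meas_borel[OF s]) measurable
      have m3': "(\<lambda>w. ennreal (cmod (f1 w - q w) powr t)) \<in> borel_measurable \<mu>"
        by (rule meas_borel[OF s]) measurable
      have m3: "(\<lambda>w. ennreal (D powr t) * ennreal (cmod (f1 w - q w) powr t)) \<in> borel_measurable \<mu>"
        by (rule meas_borel[OF s]) measurable
      have bs: "ball z \<epsilon> \<in> sets \<mu>" by (simp add: s)
      have "(\<integral>\<^sup>+ w. ennreal (2 powr t) * ((indicator \<Delta>01 w * ennreal (cmod (r w) powr t)
        + ennreal (Cr powr t) * indicator (ball z \<epsilon>) w) + ennreal (D powr t) * ennreal (cmod (f1 w - q w) powr t)) \<partial>\<mu>)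
        = ennreal (2 powr t) * (\<integral>\<^sup>+ w. ((indicator \<Delta>01 w * ennreal (cmod (r w) powr t)
        + ennreal (Cr powr t) * indicator (ball z \<epsilon>) w) + ennreal (D powr t) * ennreal (cmod (f1 w - q w) powr t)) \<partial>\<mu>)"
        by (rule nn_integral_cmult) (intro borel_measurable_add m1 m2 m3)
      also have "(\<integral>\<^sup>+ w. ((indicator \<Delta>01 w * ennreal (cmod (r w) powr t)
        + ennreal (Cr powr t) * indicator (ball z \<epsilon>) w) + ennreal (D powr t) * ennreal (cmod (f1 w - q w) powr t)) \<partial>\<mu>)
        = (\<integral>\<^sup>+ w. (indicator \<Delta>01 w * ennreal (cmod (r w) powr t)
        + ennreal (Cr powr t) * indicator (ball z \<epsilon>) w) \<partial>\<mu>) + (\<integral>\<^sup>+ w. ennreal (D powr t) * ennreal (cmod (f1 w - q w) powr t) \<partial>\<mu>)"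
        by (rule nn_integral_add[OF borel_measurable_add[OF m1 m2] m3])
      also have "(\<integral>\<^sup>+ w. (indicator \<Delta>01 w * ennreal (cmod (r w) powr t)
        + ennreal (Cr powr t) * indicator (ball z \<epsilon>) w) \<partial>\<mu>)
        = I01 + (\<integral>\<^sup>+ w. ennreal (Cr powr t) * indicator (ball z \<epsilon>) w \<partial>\<mu>)"
        unfolding I01_def by (rule nn_integral_add[OF m1 m2])
      also have "(\<integral>\<^sup>+ w. ennreal (Cr powr t) * indicator (ball z \<epsilon>) w \<partial>\<mu>) = ennreal (Cr powr t) * emeasure \<mu> (ball z \<epsilon>)"
        by (rule nn_integral_cmult_indicator[OF bs])
      also have "(\<integral>\<^sup>+ w. ennreal (D powr t) * ennreal (cmod (f1 w - q w) powr t) \<partial>\<mu>) = ennreal (D powr t) * Jint"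
        unfolding Jint_def by (rule nn_integral_cmult[OF m3'])
      finally show ?thesis unfolding ptw .
    qed
    also have "\<dots> = ennreal (2 powr t * ((a + Cr powr t * m) + D powr t * J))"
      unfolding I01a em JJ using a0 m0 J0 by (simp add: ennreal_plus ennreal_mult)
    also have "\<dots> \<le> ennreal (2 powr t * (a + \<theta>))"
    proof (rule ennreal_leI, rule mult_left_mono)
      have "Cr powr t * m < \<theta> / 2" using mlt Cr by (simp add: field_simps)
      moreover have "D powr t * J < \<theta> / 2" using Jlt Dpos by (simp add: field_simps)
      ultimately show "a + Cr powr t * m + D powr t * J \<le> a + \<theta>" by simp
    qed simp
    finally have Iu_le: "Iu \<le> ennreal (2 powr t * (a + \<theta>))" .
    define X where "X = 2 powr t * (a + \<theta>)"
    have X0: "X \<ge> 0" unfolding X_def using a0 th by simp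
    have "enn2real Iu \<le> X" unfolding X_def by (rule enn2real_leI) (use a0 th Iu_le in auto)
    then have "Lt_norm \<mu> t u \<le> X powr (1/t)" unfolding Lt_norm_def Iu_def[symmetric]
      using tpos by (intro powr_mono2) auto
    with rz M0 have "cmod (r z) \<le> M * X powr (1/t)" by (meson mult_left_mono order_trans)
    then have "cmod (r z) powr t \<le> (M * X powr (1/t)) powr t" using tpos by (intro powr_mono2) auto
    also have "\<dots> = M powr t * X" using M0 X0 tpos by (simp add: powr_mult powr_powr)
    also have "\<dots> = (2 * M) powr t * (a + \<theta>)" unfolding X_def using M0 by (simp add: powr_mult)
    finally show ?thesis .
  qed
  have main2: "cmod (r z) powr t \<le> (2 * M) powr t * a"
  proof (cases "M = 0")
    case True
    then show ?thesis using main[of 1] by simp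
  next
    case False
    then have cpos: "(2 * M) powr t > 0" using M0 by simp
    show ?thesis
    proof (rule field_le_epsilon)
      fix e :: real assume e: "e > 0"
      have "cmod (r z) powr t \<le> (2 * M) powr t * (a + e / (2 * M) powr t)"
        using main[of "e / (2 * M) powr t"] e cpos by simp
      also have "\<dots> = (2 * M) powr t * a + e" using cpos by (simp add: field_simps)
      finally show "cmod (r z) powr t \<le> (2 * M) powr t * a + e" .
    qed
  qed
  show ?thesis
  proof (cases "r z = 0")
    case True
    then show ?thesis unfolding N01 using M0 a0 by simp
  next
    case False
    have "cmod (r z) = (cmod (r z) powr t) powr (1/t)"
      using False tpos by (simp add: powr_powr)
    also have "\<dots> \<le> ((2 * M) powr t * a) powr (1/t)"
      using main2 tpos by (intro powr_mono2) auto
    also have "\<dots> = 2 * M * a powr (1/t)"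
      using M0 a0 tpos by (simp add: powr_mult powr_powr)
    finally show ?thesis unfolding N01 .
  qed
qed


theorem lemma7p3:
  fixes K :: "complex set" and t :: real and \<mu> :: "complex measure"
    and \<Delta>00 \<Delta>01 :: "complex set"
  assumes "compact K" and "1 \<le> t"
    and "sets \<mu> = sets borel" and "finite_measure \<mu>" and "spt \<mu> \<subseteq> K"
    and "\<Delta>00 \<in> sets borel" and "\<Delta>01 \<in> sets borel"
    and "\<Delta>00 \<inter> \<Delta>01 = {}" and "\<Delta>00 \<union> \<Delta>01 = spt \<mu>"
    and "Rt K \<mu> t = {f. f \<in> Lt (restr \<mu> \<Delta>00) t \<and> f \<in> Rt K (restr \<mu> \<Delta>01) t}"
    and "pure K (restr \<mu> \<Delta>01) t"
  shows "abpe K (restr \<mu> \<Delta>01) t = abpe K \<mu> t"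
proof -
  note cK = assms(1) and t1 = assms(2) and s = assms(3) and D00 = assms(6) and D01 = assms(7)
  have tpos: "t > 0" using t1 by simp
  interpret finite_measure \<mu> by (rule assms(4))
  have sp: "space \<mu> = UNIV" using space_good[OF s] .
  have finU: "emeasure \<mu> UNIV \<noteq> \<infinity>" using emeasure_finite[of UNIV] by simp
  have "AE w in \<mu>. w \<in> spt \<mu>" by (rule spt_AE[OF s])
  moreover have "AE w in \<mu>. w \<in> spt \<mu> \<longrightarrow> w \<in> K" using assms(5) by (intro AE_I2) auto
  ultimately have AEK: "AE w in \<mu>. w \<in> K" by (rule AE_mp)
  have g: "good \<mu> K" unfolding good_def using s finU AEK by blast
  have L00: "f \<in> Rt K \<mu> t" if "f \<in> Lt (restr \<mu> \<Delta>00) t" "f \<in> Rt K (restr \<mu> \<Delta>01) t" for f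
    using that assms(10) by blast
  have Nle: "Lt_norm (restr \<mu> \<Delta>01) t r \<le> Lt_norm \<mu> t r" if rR: "r \<in> Rat K" for r
  proof -
    have rm[measurable]: "r \<in> borel_measurable borel" using Rat_meas[OF rR] .
    obtain Cr where Cr: "Cr > 0" "\<forall>w\<in>K. cmod (r w) \<le> Cr" using Rat_bdd[OF cK rR] by blast
    have "(\<integral>\<^sup>+ w. ennreal (cmod (r w) powr t) \<partial>restr \<mu> \<Delta>01)
        = (\<integral>\<^sup>+ w. indicator \<Delta>01 w * ennreal (cmod (r w) powr t) \<partial>\<mu>)"
      by (rule nn_restr) (use s D01 in auto)
    also have "\<dots> \<le> (\<integral>\<^sup>+ w. ennreal (cmod (r w) powr t) \<partial>\<mu>)"
      by (rule nn_integral_mono) (auto simp: indicator_def)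
    finally have le: "(\<integral>\<^sup>+ w. ennreal (cmod (r w) powr t) \<partial>restr \<mu> \<Delta>01) \<le> (\<integral>\<^sup>+ w. ennreal (cmod (r w) powr t) \<partial>\<mu>)" .
    have fin: "(\<integral>\<^sup>+ w. ennreal (cmod (r w) powr t) \<partial>\<mu>) < top"
      using good_fin[OF g rm Cr(2) tpos] by simp
    show ?thesis unfolding Lt_norm_def
      using enn2real_mono[OF le fin] tpos by (intro powr_mono2) auto
  qed
  have N0: "Lt_norm \<nu> t r \<ge> 0" for \<nu> r unfolding Lt_norm_def by simp
  show ?thesis
  proof (intro equalityI subsetI)
    fix z0 assume "z0 \<in> abpe K (restr \<mu> \<Delta>01) t"
    then obtain \<delta> M where z0: "z0 \<in> interior {z. bpe K (restr \<mu> \<Delta>01) t z}" "\<delta> > 0" "M > 0"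
      "\<forall>z\<in>ball z0 \<delta>. \<forall>r\<in>Rat K. cmod (r z) \<le> M * Lt_norm (restr \<mu> \<Delta>01) t r"
      unfolding abpe_def by blast
    have "{z. bpe K (restr \<mu> \<Delta>01) t z} \<subseteq> {z. bpe K \<mu> t z}"
    proof (intro subsetI CollectI)
      fix z assume "z \<in> {z. bpe K (restr \<mu> \<Delta>01) t z}"
      then obtain M' where "z \<in> K" "\<forall>r\<in>Rat K. cmod (r z) \<le> M' * Lt_norm (restr \<mu> \<Delta>01) t r"
        unfolding bpe_def by blast
      then have "\<forall>r\<in>Rat K. cmod (r z) \<le> max M' 0 * Lt_norm \<mu> t r"
        using Nle N0 by (meson max.cobounded1 max.cobounded2 mult_mono mult_right_mono order_trans)
      then show "bpe K \<mu> t z" unfolding bpe_def using \<open>z \<in> K\<close> by blast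
    qed
    then have "z0 \<in> interior {z. bpe K \<mu> t z}" using z0(1) interior_mono by blast
    moreover have "\<forall>z\<in>ball z0 \<delta>. \<forall>r\<in>Rat K. cmod (r z) \<le> M * Lt_norm \<mu> t r"
      using z0(4) Nle z0(3) by (meson mult_left_mono less_imp_le order_trans)
    ultimately show "z0 \<in> abpe K \<mu> t" unfolding abpe_def using z0(2,3) by blast
  next
    fix z0 assume "z0 \<in> abpe K \<mu> t"
    then obtain \<delta> M where z0: "z0 \<in> interior {z. bpe K \<mu> t z}" "\<delta> > 0" "M > 0"
      "\<forall>z\<in>ball z0 \<delta>. \<forall>r\<in>Rat K. cmod (r z) \<le> M * Lt_norm \<mu> t r"
      unfolding abpe_def by blast
    obtain \<delta>1 where d1: "\<delta>1 > 0" "ball z0 \<delta>1 \<subseteq> {z. bpe K \<mu> t z}"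
      using z0(1) by (meson mem_interior)
    define \<delta>' where "\<delta>' = min \<delta> \<delta>1"
    have d': "\<delta>' > 0" unfolding \<delta>'_def using z0(2) d1(1) by simp
    have bK: "ball z0 \<delta>' \<subseteq> K" using d1(2) unfolding \<delta>'_def bpe_def by auto
    have bb: "ball z0 \<delta>' \<subseteq> ball z0 \<delta>" unfolding \<delta>'_def by auto
    have nonatom: "cmod (r z) \<le> 2 * M * Lt_norm (restr \<mu> \<Delta>01) t r"
      if "z \<in> ball z0 \<delta>'" "emeasure \<mu> {z} = 0" "r \<in> Rat K" for z r
      by (rule key[OF cK t1 g D00 D01 L00 _ that(2) _ _ that(3)])
         (use that bK bb z0(3,4) in auto)
    have all: "cmod (r z) \<le> 2 * M * Lt_norm (restr \<mu> \<Delta>01) t r"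
      if zb: "z \<in> ball z0 \<delta>'" and rR: "r \<in> Rat K" for z r
    proof (rule ccontr)
      let ?c = "2 * M * Lt_norm (restr \<mu> \<Delta>01) t r"
      assume "\<not> cmod (r z) \<le> ?c"
      then have gap: "cmod (r z) - ?c > 0" by simp
      have "isCont r z" using Rat_isCont[OF rR] zb bK by blast
      then obtain d where d: "d > 0" "\<forall>w. dist w z < d \<longrightarrow> dist (r w) (r z) < cmod (r z) - ?c"
        using gap unfolding continuous_at_eps_delta by blast
      define \<rho> where "\<rho> = min d (\<delta>' - dist z0 z)"
      have rho: "\<rho> > 0" unfolding \<rho>_def using d zb by simp
      obtain w where w: "w \<in> ball z \<rho>" "w \<notin> {x. measure \<mu> {x} \<noteq> 0}"
        using ball_minus_countable_nonempty[OF countable_support rho] by blast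
      have wb: "w \<in> ball z0 \<delta>'"
      proof -
        have "dist z0 w \<le> dist z0 z + dist z w" by (rule dist_triangle)
        moreover have "dist z w < \<rho>" using w(1) by simp
        moreover have "\<rho> \<le> \<delta>' - dist z0 z" unfolding \<rho>_def by simp
        ultimately show ?thesis by simp
      qed
      have "emeasure \<mu> {w} = 0" using w(2) by (simp add: emeasure_eq_measure)
      then have c1: "cmod (r w) \<le> ?c" using nonatom[OF wb _ rR] by simp
      have "dist w z < d" using w(1) unfolding \<rho>_def by (simp add: dist_commute)
      then have "dist (r w) (r z) < cmod (r z) - ?c" using d by blast
      moreover have "cmod (r z) \<le> cmod (r w) + dist (r w) (r z)"
        by (metis dist_commute dist_norm norm_triangle_sub)
      ultimately show False using c1 by linarith
    qed
    have "ball z0 \<delta>' \<subseteq> {z. bpe K (restr \<mu> \<Delta>01) t z}"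
      using bK all unfolding bpe_def by blast
    then have "z0 \<in> interior {z. bpe K (restr \<mu> \<Delta>01) t z}"
      using d' by (meson mem_interior)
    moreover have "2 * M > 0" using z0(3) by simp
    ultimately show "z0 \<in> abpe K (restr \<mu> \<Delta>01) t" unfolding abpe_def using d' all by blast
  qed
qed


end
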